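(* Let $\alpha\ge0$ and let $X$ be a homogeneous Poisson point process in $\mathbb R^d$ of intensity $1$ with distribution $\mathbb P$. For $\varphi\in\mathbf N_o$ let $$\xi_{\rm RN}(\varphi)=\frac12\sum_{x\in\varphi:\ \varphi\cap B_{|x|}(o)\cap B_{|x|}(x)=\emptyset}|x|^\alpha.$$ Then $\xi_{\rm RN}$ is weakly decreasing, i.e., there exists $k\ge1$ such that $$\mathbb P\big(\#\{y\in X:\ \xi_{\rm RN}(X\cup\{o\}-y)>\xi_{\rm RN}(X-y)\}\le k\big)=1.$$
   Context: $\mathbf N_o$ denotes the locally finite point configurations in $\mathbb R^d$ containing the origin $o$; $B_r(z)$ is the open Euclidean ball of radius $r$ around $z$; $\varphi-y$ denotes the configuration shifted by $-y$. $\xi_{\rm RN}$ is the score function of the sum of $\alpha$-power-weighted edge lengths at the origin in the relative neighborhood graph. *)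

theory Defs
  imports "HOL-Probability.Probability"
begin

definition locally_finite_cfg :: "'a::euclidean_space set \<Rightarrow> bool" where
  "locally_finite_cfg \<phi> \<longleftrightarrow> (\<forall>K. bounded K \<longrightarrow> finite (\<phi> \<inter> K))"

definition shift_cfg :: "'a::euclidean_space set \<Rightarrow> 'a \<Rightarrow> 'a set" where
  "shift_cfg \<phi> y = (\<lambda>x. x - y) ` \<phi>"

definition xi_RN :: "real \<Rightarrow> 'a::euclidean_space set \<Rightarrow> ennreal" where
  "xi_RN \<alpha> \<phi> = ennreal (1/2) *
     (\<integral>\<^sup>+ x. ennreal (norm x powr \<alpha>)
        \<partial>count_space {x \<in> \<phi>. \<phi> \<inter> ball 0 (norm x) \<inter> ball x (norm x) = {}})"

definition poisson_pp :: "'w measure \<Rightarrow> ('w \<Rightarrow> 'a::euclidean_space set) \<Rightarrow> bool" where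
  "poisson_pp M X \<longleftrightarrow>
     prob_space M \<and>
     (\<forall>\<omega>\<in>space M. locally_finite_cfg (X \<omega>)) \<and>
     (\<forall>B. B \<in> sets lborel \<and> bounded B \<longrightarrow>
        (\<lambda>\<omega>. card (X \<omega> \<inter> B)) \<in> measurable M (count_space UNIV) \<and>
        (\<forall>n::nat. measure M {\<omega>\<in>space M. card (X \<omega> \<inter> B) = n}
                   = exp (- measure lborel B) * measure lborel B ^ n / fact n)) \<and>
     (\<forall>(I::nat set) B. finite I \<and> (\<forall>i\<in>I. B i \<in> sets lborel \<and> bounded (B i)) \<and>
        disjoint_family_on B I \<longrightarrow>
        prob_space.indep_vars M (\<lambda>_. count_space UNIV) (\<lambda>i \<omega>. card (X \<omega> \<inter> B i)) I)"

end

theory Submission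
  imports Defs
begin


definition lune_free :: "'a::euclidean_space set \<Rightarrow> 'a set" where
  "lune_free X = {y\<in>X. y \<noteq> 0 \<and> (\<forall>w\<in>X. \<not>(norm w < norm y \<and> norm (w - y) < norm y))}"

lemma xi_insert_le:
  fixes \<psi> :: "'a::euclidean_space set"
  assumes "p \<notin> {x \<in> insert p \<psi>. insert p \<psi> \<inter> ball 0 (norm x) \<inter> ball x (norm x) = {}}"
  shows "xi_RN \<alpha> (insert p \<psi>) \<le> xi_RN \<alpha> \<psi>"
proof -
  let ?A = "{x \<in> insert p \<psi>. insert p \<psi> \<inter> ball 0 (norm x) \<inter> ball x (norm x) = {}}"
  let ?B = "{x \<in> \<psi>. \<psi> \<inter> ball 0 (norm x) \<inter> ball x (norm x) = {}}"
  have sub: "?A \<subseteq> ?B" using assms by blast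
  have "(\<integral>\<^sup>+ x. ennreal (norm x powr \<alpha>) \<partial>count_space ?A) \<le> (\<integral>\<^sup>+ x. ennreal (norm x powr \<alpha>) \<partial>count_space ?B)"
    apply (subst (1 2) nn_integral_count_space_indicator)
      apply (simp_all add: NO_MATCH_def)[2]
    apply (rule nn_integral_mono)
    using sub by (auto simp: indicator_def)
  then show ?thesis unfolding xi_RN_def by (intro mult_left_mono) auto
qed

lemma S_sub_N:
  fixes X :: "'a::euclidean_space set"
  shows "{y \<in> X. xi_RN \<alpha> (shift_cfg (insert 0 X) y) > xi_RN \<alpha> (shift_cfg X y)} \<subseteq> lune_free X"
proof
  fix y assume "y \<in> {y \<in> X. xi_RN \<alpha> (shift_cfg (insert 0 X) y) > xi_RN \<alpha> (shift_cfg X y)}"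
  then have yX: "y \<in> X" and gt: "xi_RN \<alpha> (shift_cfg (insert 0 X) y) > xi_RN \<alpha> (shift_cfg X y)" by auto
  have y0: "y \<noteq> 0"
  proof
    assume "y = 0" then have "insert 0 X = X" using yX by auto
    then show False using gt by simp
  qed
  have eq: "shift_cfg (insert 0 X) y = insert (-y) (shift_cfg X y)" by (simp add: shift_cfg_def)
  have "-y \<in> {x \<in> insert (-y) (shift_cfg X y). insert (-y) (shift_cfg X y) \<inter> ball 0 (norm x) \<inter> ball x (norm x) = {}}"
    using xi_insert_le[of "-y" "shift_cfg X y" \<alpha>] gt eq by (metis leD)
  then have E: "insert (-y) (shift_cfg X y) \<inter> ball 0 (norm y) \<inter> ball (-y) (norm y) = {}" by simp
  have "\<not>(norm w < norm y \<and> norm (w - y) < norm y)" if "w \<in> X" for w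
  proof
    assume h: "norm w < norm y \<and> norm (w - y) < norm y"
    have "w - y \<in> shift_cfg X y" using that by (auto simp: shift_cfg_def)
    moreover have "w - y \<in> ball 0 (norm y)" using h by (simp add: dist_norm norm_minus_commute)
    moreover have "w - y \<in> ball (-y) (norm y)" using h by (simp add: dist_norm)
    ultimately show False using E by blast
  qed
  then show "y \<in> lune_free X" using yX y0 by (auto simp: lune_free_def)
qed

lemma N_inner:
  fixes X :: "'a::euclidean_space set"
  assumes inj: "inj_on norm X" and y: "y \<in> lune_free X" and z: "z \<in> lune_free X" and yz: "y \<noteq> z"
  shows "inner y z \<le> norm y * norm z / 2"
proof -
  have key: "inner a b \<le> norm a * norm b / 2" if a: "a \<in> lune_free X" and b: "b \<in> lune_free X"
    and lt: "norm a < norm b" for a b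
  proof -
    have "a \<in> X" "\<forall>w\<in>X. \<not>(norm w < norm b \<and> norm (w - b) < norm b)" using a b by (auto simp: lune_free_def)
    then have "norm (a - b) \<ge> norm b" using lt by auto
    then have "norm (a - b)^2 \<ge> norm b^2" by (simp add: power_mono)
    then have "norm a ^2 - 2 * inner a b \<ge> 0"
      by (simp add: power2_norm_eq_inner inner_diff_left inner_diff_right inner_commute)
    then have "inner a b \<le> norm a^2/2" by simp
    also have "\<dots> \<le> norm a * norm b / 2" using lt by (simp add: power2_eq_square mult_left_mono)
    finally show ?thesis .
  qed
  have "norm y \<noteq> norm z" using inj y z yz by (auto simp: lune_free_def inj_on_def)
  then show ?thesis
    using key[OF y z] key[OF z y] by (cases "norm y < norm z") (auto simp: inner_commute mult.commute)
qed

lemma N_card: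
  fixes X :: "'a::euclidean_space set"
  assumes inj: "inj_on norm X"
  shows "finite (lune_free X) \<and> card (lune_free X) \<le> (2 * DIM('a) + 1) ^ DIM('a)"
proof -
  define d where "d = DIM('a)"
  have dpos: "d > 0" by (simp add: d_def)
  define g where "g y = (\<lambda>b\<in>Basis. \<lfloor>real d * inner (y /\<^sub>R norm y) b\<rfloor>)" for y :: 'a
  define P where "P = (\<Pi>\<^sub>E b\<in>(Basis::'a set). {-int d..int d})"
  have gP: "g ` lune_free X \<subseteq> P"
  proof
    fix t assume "t \<in> g ` lune_free X"
    then obtain y where y: "y \<in> lune_free X" and t: "t = g y" by auto
    have "y \<noteq> 0" using y by (simp add: lune_free_def)
    have "t b \<in> {-int d..int d}" if b: "b \<in> Basis" for b
    proof -
      have "\<bar>inner (y /\<^sub>R norm y) b\<bar> \<le> 1"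
        using Basis_le_norm[OF b, of "y /\<^sub>R norm y"] \<open>y \<noteq> 0\<close> by simp
      then have "\<bar>real d * inner (y /\<^sub>R norm y) b\<bar> \<le> real d"
        by (simp add: abs_mult mult_left_le)
      then show ?thesis unfolding t g_def using b
        by (simp add: abs_le_iff le_floor_iff floor_le_iff)
    qed
    then show "t \<in> P" unfolding P_def t g_def by auto
  qed
  have ginj: "inj_on g (lune_free X)"
  proof (rule inj_onI, rule ccontr)
    fix y z assume y: "y \<in> lune_free X" and z: "z \<in> lune_free X" and eq: "g y = g z" and ne: "y \<noteq> z"
    have y0: "y \<noteq> 0" and z0: "z \<noteq> 0" using y z by (auto simp: lune_free_def)
    define u where "u = y /\<^sub>R norm y"
    define v where "v = z /\<^sub>R norm z"
    have "inner u v = inner y z / (norm y * norm z)" unfolding u_def v_def by (simp add: field_simps)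
    also have "\<dots> \<le> 1/2" using N_inner[OF inj y z ne] y0 z0 by (simp add: divide_simps)
    finally have uv: "inner u v \<le> 1/2" .
    have "norm (u - v)^2 = 2 - 2 * inner u v" unfolding u_def v_def using y0 z0
      by (simp add: power2_norm_eq_inner inner_diff_left inner_diff_right inner_commute)
       (simp add: dot_square_norm power2_eq_square field_simps)
    with uv have ge: "norm (u - v)^2 \<ge> 1" by simp
    have each: "\<bar>inner (u - v) b\<bar> < 1 / real d" if b: "b \<in> Basis" for b
    proof -
      have "\<lfloor>real d * inner u b\<rfloor> = \<lfloor>real d * inner v b\<rfloor>"
        using fun_cong[OF eq, of b] b unfolding g_def u_def v_def by simp
      then have "\<bar>real d * inner u b - real d * inner v b\<bar> < 1"
        by (smt (verit, best) floor_eq_iff)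
      then have "real d * \<bar>inner (u - v) b\<bar> < 1"
        by (simp add: inner_diff_left abs_mult right_diff_distrib[symmetric])
      then show ?thesis using dpos by (simp add: field_simps)
    qed
    have "norm (u - v) \<le> (\<Sum>b\<in>Basis. \<bar>inner (u - v) b\<bar>)" by (rule norm_le_l1)
    also have "\<dots> < (\<Sum>b\<in>(Basis::'a set). 1 / real d)"
      by (rule sum_strict_mono) (use each in auto)
    also have "\<dots> = 1" using dpos by (simp add: d_def)
    finally have "norm (u - v) < 1" .
    then have "norm (u - v)^2 < 1" by (simp add: power_less_one_iff abs_less_iff)
    with ge show False by simp
  qed
  have finP: "finite P" unfolding P_def by (simp add: finite_PiE)
  have hn: "nat (2 * int n + 1) = Suc (2*n)" for n by arith
  have cardP: "card P = (2 * d + 1) ^ d" unfolding P_def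
    by (simp add: card_PiE d_def hn)
  have "finite (lune_free X)" using inj_on_finite[OF ginj gP finP] .
  moreover have "card (lune_free X) \<le> card P" using card_inj_on_le[OF ginj gP finP] .
  ultimately show ?thesis using cardP by (simp add: d_def)
qed



lemma two_points_prob:
  fixes M :: "'w measure" and X :: "'w \<Rightarrow> 'a::euclidean_space set"
  assumes pp: "poisson_pp M X" and B: "B \<in> sets lborel" "bounded B"
  shows "{\<omega>\<in>space M. 2 \<le> card (X \<omega> \<inter> B)} \<in> sets M"
    and "measure M {\<omega>\<in>space M. 2 \<le> card (X \<omega> \<inter> B)} \<le> (measure lborel B)^2"
proof -
  interpret prob_space M using pp by (simp add: poisson_pp_def)
  define f where "f \<omega> = card (X \<omega> \<inter> B)" for \<omega>
  define m where "m = measure lborel B"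
  have m0: "m \<ge> 0" by (simp add: m_def)
  have fm: "f \<in> measurable M (count_space UNIV)" unfolding f_def[abs_def] using pp B by (simp add: poisson_pp_def)
  have P: "measure M {\<omega>\<in>space M. f \<omega> = n} = exp (- m) * m ^ n / fact n" for n
    using pp B by (simp add: poisson_pp_def f_def m_def)
  have S: "{\<omega>\<in>space M. P (f \<omega>)} \<in> sets M" for P
  proof -
    have "f -` {n. P n} \<inter> space M \<in> sets M" by (rule measurable_sets[OF fm]) auto
    moreover have "f -` {n. P n} \<inter> space M = {\<omega>\<in>space M. P (f \<omega>)}" by auto
    ultimately show ?thesis by simp
  qed
  show "{\<omega>\<in>space M. 2 \<le> card (X \<omega> \<inter> B)} \<in> sets M" using S[of "\<lambda>n. 2 \<le> n"] by (simp add: f_def)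
  have eq: "{\<omega>\<in>space M. 2 \<le> f \<omega>} = space M - ({\<omega>\<in>space M. f \<omega> = 0} \<union> {\<omega>\<in>space M. f \<omega> = 1})"
    by auto
  have "prob {\<omega>\<in>space M. 2 \<le> f \<omega>} = 1 - prob ({\<omega>\<in>space M. f \<omega> = 0} \<union> {\<omega>\<in>space M. f \<omega> = 1})"
    unfolding eq by (rule prob_compl) (use S in auto)
  also have "\<dots> = 1 - (exp (-m) + exp (-m) * m)"
    by (subst finite_measure_Union) (use S P in auto)
  also have "\<dots> \<le> m^2"
  proof -
    have "1 - m \<le> exp (-m)" using exp_ge_add_one_self[of "-m"] by simp
    then have "(1 - m) * (1 + m) \<le> exp (-m) * (1 + m)" using m0 by (intro mult_right_mono) auto
    then show ?thesis by (simp add: algebra_simps power2_eq_square)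
  qed
  finally show "measure M {\<omega>\<in>space M. 2 \<le> card (X \<omega> \<inter> B)} \<le> (measure lborel B)^2"
    by (simp add: f_def m_def)
qed

definition shell :: "real \<Rightarrow> real \<Rightarrow> 'a::euclidean_space set" where
  "shell a b = ball 0 b - ball 0 a"

lemma shell_sets: "shell a b \<in> sets lborel" "bounded (shell a b)"
  unfolding shell_def by auto

lemma shell_measure:
  assumes "0 \<le> a" "a \<le> b"
  shows "measure lborel (shell a b :: 'a::euclidean_space set) =
           unit_ball_vol DIM('a) * (b ^ DIM('a) - a ^ DIM('a))"
proof -
  have sub: "ball (0::'a) a \<subseteq> ball 0 b" using assms by auto
  have "measure lborel (shell a b :: 'a set) = measure lborel (ball (0::'a) b) - measure lborel (ball (0::'a) a)"
    unfolding shell_def using assms by (intro measure_Diff) (auto simp: emeasure_ball sub)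
  also have "\<dots> = unit_ball_vol DIM('a) * (b ^ DIM('a) - a ^ DIM('a))"
    using assms by (simp add: content_ball right_diff_distrib)
  finally show ?thesis .
qed

lemma pow_diff_bound:
  fixes a b R :: real
  assumes "0 \<le> a" "a \<le> b" "b \<le> R"
  shows "b ^ d - a ^ d \<le> (b - a) * (real d * R ^ (d - 1))"
proof -
  have "b ^ d - a ^ d = (b - a) * (\<Sum>i<d. a ^ (d - Suc i) * b ^ i)" by (rule power_diff_sumr2)
  also have "(\<Sum>i<d. a ^ (d - Suc i) * b ^ i) \<le> (\<Sum>i<d. R ^ (d - 1))"
  proof (rule sum_mono)
    fix i assume i: "i \<in> {..<d}"
    have "a ^ (d - Suc i) * b ^ i \<le> R ^ (d - Suc i) * R ^ i"
      using assms by (intro mult_mono power_mono) auto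
    also have "\<dots> = R ^ (d - 1)" using i by (simp add: power_add[symmetric])
    finally show "a ^ (d - Suc i) * b ^ i \<le> R ^ (d - 1)" .
  qed
  then have "(b - a) * (\<Sum>i<d. a ^ (d - Suc i) * b ^ i) \<le> (b - a) * (\<Sum>i<d. R ^ (d - 1))"
    using assms by (intro mult_left_mono) auto
  finally show ?thesis by simp
qed

lemma shell_small:
  fixes R :: real and n i :: nat
  assumes R: "R > 0" and n: "n \<ge> 1" and i: "i < n"
  shows "measure lborel (shell (R * i / n) (R * (i+1) / n) :: 'a::euclidean_space set)
         \<le> unit_ball_vol DIM('a) * real DIM('a) * R ^ DIM('a) / n"
proof -
  define d where "d = DIM('a)"
  have d1: "d \<ge> 1" by (simp add: d_def)
  have a0: "0 \<le> R * i / n" using R by simp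
  have ab: "R * i / n \<le> R * (i+1) / n" using R n by (simp add: divide_right_mono)
  have "real i + 1 \<le> real n" using i by simp
  then have "R * (real i + 1) \<le> R * n" using R by (intro mult_left_mono) auto
  then have bR: "R * (i+1) / n \<le> R" using R n by (simp add: field_simps)
  have "measure lborel (shell (R * i / n) (R * (i+1) / n) :: 'a set)
      = unit_ball_vol d * ((R * (i+1) / n) ^ d - (R * i / n) ^ d)"
    using shell_measure[OF a0 ab] by (simp add: d_def)
  also have "\<dots> \<le> unit_ball_vol d * ((R * (i+1) / n - R * i / n) * (real d * R ^ (d - 1)))"
    by (intro mult_left_mono pow_diff_bound a0 ab bR) (simp add: d_def)
  also have "R * (i+1) / n - R * i / n = R / n" by (simp add: diff_divide_distrib[symmetric] algebra_simps)
  also have "unit_ball_vol d * (R / n * (real d * R ^ (d - 1))) = unit_ball_vol d * real d * (R * R ^ (d - 1)) / n"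
    by (simp add: field_simps)
  also have "R * R ^ (d - 1) = R ^ d" using d1 by (metis power_Suc Suc_diff_1 less_le_trans zero_less_one)
  finally show ?thesis by (simp add: d_def)
qed



lemma AE_inj:
  fixes M :: "'w measure" and X :: "'w \<Rightarrow> 'a::euclidean_space set"
  assumes pp: "poisson_pp M X"
  shows "AE \<omega> in M. inj_on norm (X \<omega>)"
proof -
  interpret prob_space M using pp by (simp add: poisson_pp_def)
  have lf: "\<And>\<omega>. \<omega> \<in> space M \<Longrightarrow> locally_finite_cfg (X \<omega>)" using pp by (simp add: poisson_pp_def)
  define C where "C R = unit_ball_vol DIM('a) * real DIM('a) * R ^ DIM('a)" for R :: real
  define Sh where "Sh R n i = (shell (R * real i / real n) (R * real (i+1) / real n) :: 'a set)" for R n i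
  define E where "E R n i = {\<omega>\<in>space M. 2 \<le> card (X \<omega> \<inter> Sh R n i)}" for R n i
  define F where "F R = (\<Inter>n. \<Union>i<Suc n. E R (Suc n) i)" for R
  have Esets: "E R n i \<in> sets M" for R n i
    unfolding E_def Sh_def by (rule two_points_prob(1)[OF pp shell_sets])
  have Fsets: "F R \<in> sets M" for R
    unfolding F_def using Esets by auto
  have Fnull: "F R \<in> null_sets M" if R: "R > 0" for R
  proof -
    have bound: "prob (F R) \<le> (C R)^2 / real (Suc n)" for n
    proof -
      have "prob (F R) \<le> prob (\<Union>i<Suc n. E R (Suc n) i)"
        by (rule finite_measure_mono) (auto simp: F_def intro!: Esets)
      also have "\<dots> \<le> (\<Sum>i<Suc n. prob (E R (Suc n) i))"
        by (rule measure_UNION_le) (auto intro: Esets)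
      also have "\<dots> \<le> (\<Sum>i<Suc n. (C R / real (Suc n))^2)"
      proof (rule sum_mono)
        fix i assume i: "i \<in> {..<Suc n}"
        have "prob (E R (Suc n) i) \<le> (measure lborel (Sh R (Suc n) i))^2"
          unfolding E_def Sh_def by (rule two_points_prob(2)[OF pp shell_sets])
        also have "\<dots> \<le> (C R / real (Suc n))^2"
          using shell_small[OF R, of "Suc n" i] i unfolding Sh_def C_def
          by (intro power_mono) (auto simp del: of_nat_Suc)
        finally show "prob (E R (Suc n) i) \<le> (C R / real (Suc n))^2" .
      qed
      also have "\<dots> = (C R)^2 / real (Suc n)"
        by (simp add: power2_eq_square field_simps del: of_nat_Suc)
      finally show ?thesis .
    qed
    have "prob (F R) = 0"
    proof (rule ccontr)
      assume "prob (F R) \<noteq> 0"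
      then have p: "prob (F R) > 0" using measure_nonneg[of M "F R"] by linarith
      obtain n :: nat where n: "(C R)^2 / prob (F R) < real n" using reals_Archimedean2 by blast
      then have "(C R)^2 < prob (F R) * real (Suc n)" using p by (simp add: field_simps)
      then have "(C R)^2 / real (Suc n) < prob (F R)" by (simp add: field_simps del: of_nat_Suc)
      with bound[of n] show False by simp
    qed
    then show ?thesis using Fsets by (simp add: null_sets_def emeasure_eq_measure)
  qed
  show ?thesis
  proof (rule AE_I'[of "\<Union>k. F (real (Suc k))"])
    show "(\<Union>k. F (real (Suc k))) \<in> null_sets M" by (intro null_sets_UN Fnull) simp
    show "{\<omega> \<in> space M. \<not> inj_on norm (X \<omega>)} \<subseteq> (\<Union>k. F (real (Suc k)))"
    proof
      fix \<omega> assume "\<omega> \<in> {\<omega> \<in> space M. \<not> inj_on norm (X \<omega>)}"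
      then have om: "\<omega> \<in> space M" and ni: "\<not> inj_on norm (X \<omega>)" by auto
      then obtain x z where x: "x \<in> X \<omega>" and z: "z \<in> X \<omega>" and xz: "x \<noteq> z" and nxz: "norm x = norm z"
        unfolding inj_on_def by blast
      define k where "k = nat \<lceil>norm x\<rceil>"
      define R where "R = real (Suc k)"
      have R0: "R > 0" by (simp add: R_def)
      have xR: "norm x < R" unfolding R_def k_def by linarith
      have "\<omega> \<in> F R"
      proof -
        have "\<omega> \<in> E R (Suc n) i" if "i = nat \<lfloor>norm x * real (Suc n) / R\<rfloor>" for n i
        proof -
          define t where "t = norm x * real (Suc n) / R"
          have t0: "t \<ge> 0" using R0 by (simp add: t_def)
          have it: "real i \<le> t" "t < real i + 1" using that t0 unfolding t_def[symmetric] by linarith+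
          have lo: "R * real i / real (Suc n) \<le> norm x"
            using it(1) R0 unfolding t_def by (simp add: field_simps del: of_nat_Suc)
          have hi: "norm x < R * real (i+1) / real (Suc n)"
            using it(2) R0 unfolding t_def by (simp add: field_simps)
          have xin: "x \<in> Sh R (Suc n) i" "z \<in> Sh R (Suc n) i"
            using lo hi nxz unfolding Sh_def shell_def by auto
          have "bounded (Sh R (Suc n) i)" unfolding Sh_def by (rule shell_sets)
          then have fin: "finite (X \<omega> \<inter> Sh R (Suc n) i)" using lf[OF om] by (simp add: locally_finite_cfg_def)
          have "card {x, z} \<le> card (X \<omega> \<inter> Sh R (Suc n) i)"
            by (rule card_mono[OF fin]) (use x z xin in auto)
          then show ?thesis using xz om by (simp add: E_def)
        qed
        moreover have "nat \<lfloor>norm x * real (Suc n) / R\<rfloor> < Suc n" for n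
        proof -
          have "norm x * real (Suc n) / R < real (Suc n)" using xR R0 by (simp add: field_simps del: of_nat_Suc)
          then show ?thesis by linarith
        qed
        ultimately show ?thesis unfolding F_def by blast
      qed
      then show "\<omega> \<in> (\<Union>k. F (real (Suc k)))" unfolding R_def by blast
    qed
  qed
qed


theorem lemma2p2:
  fixes M :: "'w measure" and X :: "'w \<Rightarrow> 'a::euclidean_space set" and \<alpha> :: real
  assumes "\<alpha> \<ge> 0"
    and "poisson_pp M X"
  shows "\<exists>k::nat. k \<ge> 1 \<and>
    (AE \<omega> in M. finite {y \<in> X \<omega>. xi_RN \<alpha> (shift_cfg (insert 0 (X \<omega>)) y) > xi_RN \<alpha> (shift_cfg (X \<omega>) y)}
              \<and> card {y \<in> X \<omega>. xi_RN \<alpha> (shift_cfg (insert 0 (X \<omega>)) y) > xi_RN \<alpha> (shift_cfg (X \<omega>) y)} \<le> k)"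
proof (intro exI conjI)
  show "1 \<le> (2 * DIM('a) + 1) ^ DIM('a)" by simp
  show "AE \<omega> in M. finite {y \<in> X \<omega>. xi_RN \<alpha> (shift_cfg (insert 0 (X \<omega>)) y) > xi_RN \<alpha> (shift_cfg (X \<omega>) y)}
              \<and> card {y \<in> X \<omega>. xi_RN \<alpha> (shift_cfg (insert 0 (X \<omega>)) y) > xi_RN \<alpha> (shift_cfg (X \<omega>) y)} \<le> (2 * DIM('a) + 1) ^ DIM('a)"
    using AE_inj[OF assms(2)]
  proof eventually_elim
    case (elim \<omega>)
    note N = N_card[OF elim]
    note sub = S_sub_N[where X="X \<omega>" and \<alpha>=\<alpha>]
    show ?case using N sub finite_subset card_mono by (meson order_trans)
  qed
qed

end
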